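(* In Algorithm SC (with $|b(v)|\le\deg(v)$ for all $v$ and $\alpha\in(0,1/4]$), for every $i\ge0$ such that rounds $1,\dots,i$ have computed $r^1,\dots,r^i$, we have $\sum_{v\in V}|r^{\le i}_v|\cdot\deg(v)\le i\cdot\|b\|_1$.
   Context: Let $G=(V,E)$ be a unit-capacity undirected graph, $n=|V|\ge3$, every vertex of degree $\deg(v)\ge1$, each edge with a fixed arbitrary orientation; $B\in\mathbb R^{V\times E}$ is the incidence matrix (column $(u,v)$ has $+1$ in row $u$, $-1$ in row $v$, $0$ elsewhere). Algorithm SC takes $b\in\mathbb R^V$ with $|b(v)|\le\deg(v)$ for all $v$, $\alpha\in(0,1/4]$ and an integer $T\ge1$. Set $w^1_{v,+}=w^1_{v,-}=1$ for all $v$. For $i=1,\dots,T$: (1) for $\circ\in\{+,-\}$, $\tilde w^i_{v,\circ}=w^i_{v,\circ}$ if $w^i_{v,\circ}\ge n$ and $\tilde w^i_{v,\circ}=0$ otherwise; (2) $\tilde\phi^i_v=(\tilde w^i_{v,+}-\tilde w^i_{v,-})/\deg(v)$; (3) for each edge $(u,v)$, $f^i(u,v)=+1$ if $\tilde\phi^i_u>\tilde\phi^i_v$, $-1$ if $\tilde\phi^i_u<\tilde\phi^i_v$, $0$ otherwise; (4) if $\langle\tilde\phi^i,b\rangle>\langle\tilde\phi^i,Bf^i\rangle$, terminate; (5) $r^i_v=(b(v)-(Bf^i)_v)/\deg(v)$; (6) $w^{i+1}_{v,+}=w^i_{v,+}(1+\alpha r^i_v)$ and $w^{i+1}_{v,-}=w^i_{v,-}(1-\alpha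 r^i_v)$. Write $r^{\le i}_v=\sum_{i'=1}^{i}r^{i'}_v$, with $r^{\le 0}_v=0$. $\|b\|_1=\sum_v|b(v)|$. *)

theory Defs
  imports Main "HOL-Library.FuncSet" Complex_Main
begin

text \<open>Graph: finite vertex set V, edges E given as oriented pairs (u,v) (the fixed
arbitrary orientation of each undirected edge).\<close>

definition deg :: "('v \<times> 'v) set \<Rightarrow> 'v \<Rightarrow> real" where
  "deg E v = real (card {e \<in> E. fst e = v \<or> snd e = v})"

text \<open>(B f)_v for the incidence matrix B: column (u,v) has +1 in row u, -1 in row v.\<close>
definition incid_apply :: "('v \<times> 'v) set \<Rightarrow> ('v \<times> 'v \<Rightarrow> real) \<Rightarrow> 'v \<Rightarrow> real" where
  "incid_apply E f x = (\<Sum>e\<in>E. (if fst e = x then f e else 0) - (if snd e = x then f e else 0))"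

definition trunc_w :: "nat \<Rightarrow> real \<Rightarrow> real" where
  "trunc_w n w = (if w \<ge> real n then w else 0)"

definition phi_of :: "'v set \<Rightarrow> ('v \<times> 'v) set \<Rightarrow> ('v \<Rightarrow> real) \<times> ('v \<Rightarrow> real) \<Rightarrow> 'v \<Rightarrow> real" where
  "phi_of V E w v = (trunc_w (card V) (fst w v) - trunc_w (card V) (snd w v)) / deg E v"

definition flow_of :: "('v \<Rightarrow> real) \<Rightarrow> 'v \<times> 'v \<Rightarrow> real" where
  "flow_of phi e = (if phi (fst e) > phi (snd e) then 1
                    else if phi (fst e) < phi (snd e) then -1 else 0)"

definition r_of :: "('v \<times> 'v) set \<Rightarrow> ('v \<Rightarrow> real) \<Rightarrow> ('v \<Rightarrow> real) \<Rightarrow> 'v \<Rightarrow> real" where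
  "r_of E b phi v = (b v - incid_apply E (flow_of phi) v) / deg E v"

text \<open>sc_w V E b \<alpha> k = the weights w^{k+1} (i.e. sc_w ... 0 = w^1).\<close>
primrec sc_w :: "'v set \<Rightarrow> ('v \<times> 'v) set \<Rightarrow> ('v \<Rightarrow> real) \<Rightarrow> real \<Rightarrow> nat
                  \<Rightarrow> ('v \<Rightarrow> real) \<times> ('v \<Rightarrow> real)" where
  "sc_w V E b \<alpha> 0 = (\<lambda>_. 1, \<lambda>_. 1)"
| "sc_w V E b \<alpha> (Suc k) =
     (let w = sc_w V E b \<alpha> k; r = r_of E b (phi_of V E w) in
      (\<lambda>v. fst w v * (1 + \<alpha> * r v), \<lambda>v. snd w v * (1 - \<alpha> * r v)))"

text \<open>Round-indexed quantities, for rounds i \<ge> 1.\<close>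
definition sc_phi :: "'v set \<Rightarrow> ('v \<times> 'v) set \<Rightarrow> ('v \<Rightarrow> real) \<Rightarrow> real \<Rightarrow> nat \<Rightarrow> 'v \<Rightarrow> real" where
  "sc_phi V E b \<alpha> i = phi_of V E (sc_w V E b \<alpha> (i - 1))"

definition sc_f :: "'v set \<Rightarrow> ('v \<times> 'v) set \<Rightarrow> ('v \<Rightarrow> real) \<Rightarrow> real \<Rightarrow> nat \<Rightarrow> 'v \<times> 'v \<Rightarrow> real" where
  "sc_f V E b \<alpha> i = flow_of (sc_phi V E b \<alpha> i)"

definition sc_r :: "'v set \<Rightarrow> ('v \<times> 'v) set \<Rightarrow> ('v \<Rightarrow> real) \<Rightarrow> real \<Rightarrow> nat \<Rightarrow> 'v \<Rightarrow> real" where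
  "sc_r V E b \<alpha> i = r_of E b (sc_phi V E b \<alpha> i)"

definition sc_terminates :: "'v set \<Rightarrow> ('v \<times> 'v) set \<Rightarrow> ('v \<Rightarrow> real) \<Rightarrow> real \<Rightarrow> nat \<Rightarrow> bool" where
  "sc_terminates V E b \<alpha> i \<longleftrightarrow>
     (\<Sum>v\<in>V. sc_phi V E b \<alpha> i v * b v) >
     (\<Sum>v\<in>V. sc_phi V E b \<alpha> i v * incid_apply E (sc_f V E b \<alpha> i) v)"

end

theory Submission
  imports Defs
begin

definition Xs :: "'v set \<Rightarrow> ('v \<times> 'v) set \<Rightarrow> ('v \<Rightarrow> real) \<Rightarrow> real \<Rightarrow> nat \<Rightarrow> 'v \<Rightarrow> real" where
  "Xs V E b \<alpha> k v = (\<Sum>i'\<in>{1..k}. sc_r V E b \<alpha> i' v)"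

lemma Xs_0[simp]: "Xs V E b \<alpha> 0 v = 0"
  by (simp add: Xs_def)

lemma Xs_Suc: "Xs V E b \<alpha> (Suc k) v = Xs V E b \<alpha> k v + sc_r V E b \<alpha> (Suc k) v"
  by (simp add: Xs_def)

lemma incid_bound:
  assumes "finite E" "\<forall>e. \<bar>f e\<bar> \<le> 1"
  shows "\<bar>incid_apply E f v\<bar> \<le> deg E v"
proof -
  have "\<bar>incid_apply E f v\<bar> \<le> (\<Sum>e\<in>E. \<bar>(if fst e = v then f e else 0) - (if snd e = v then f e else 0)\<bar>)"
    unfolding incid_apply_def by (rule sum_abs)
  also have "\<dots> \<le> (\<Sum>e\<in>E. (if fst e = v \<or> snd e = v then 1 else 0))"
  proof (rule sum_mono)
    fix e assume "e \<in> E"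
    have "\<bar>f e\<bar> \<le> 1" using assms(2) by blast
    then show "\<bar>(if fst e = v then f e else 0) - (if snd e = v then f e else 0)\<bar> \<le> (if fst e = v \<or> snd e = v then 1 else 0)"
      by (auto simp: abs_le_iff)
  qed
  also have "\<dots> = (\<Sum>e\<in>{e\<in>E. fst e = v \<or> snd e = v}. 1)"
    using assms(1) by (subst sum.inter_filter[symmetric]) auto
  also have "\<dots> = deg E v" by (simp add: deg_def)
  finally show ?thesis .
qed

lemma flow_bound: "\<bar>flow_of phi e\<bar> \<le> 1"
  by (simp add: flow_of_def)

lemma r_bound:
  assumes "finite E" "deg E v \<ge> 1" "\<bar>b v\<bar> \<le> deg E v"
  shows "\<bar>r_of E b phi v\<bar> \<le> 2"
proof -
  have I: "\<bar>incid_apply E (flow_of phi) v\<bar> \<le> deg E v"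
    using incid_bound[OF assms(1)] flow_bound by blast
  have "\<bar>b v - incid_apply E (flow_of phi) v\<bar> \<le> 2 * deg E v" using I assms(3) by linarith
  then show ?thesis using assms(2) by (simp add: r_of_def abs_divide pos_divide_le_eq)
qed

lemma sc_r_bound:
  assumes "finite E" "deg E v \<ge> 1" "\<bar>b v\<bar> \<le> deg E v"
  shows "\<bar>sc_r V E b \<alpha> i v\<bar> \<le> 2"
  unfolding sc_r_def by (rule r_bound) (use assms in auto)

lemma w_bound:
  assumes "finite E" "deg E v \<ge> 1" "\<bar>b v\<bar> \<le> deg E v" "0 < \<alpha>" "\<alpha> \<le> 1/4"
  shows "0 \<le> fst (sc_w V E b \<alpha> k) v \<and> fst (sc_w V E b \<alpha> k) v \<le> exp (\<alpha> * Xs V E b \<alpha> k v)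
       \<and> 0 \<le> snd (sc_w V E b \<alpha> k) v \<and> snd (sc_w V E b \<alpha> k) v \<le> exp (- \<alpha> * Xs V E b \<alpha> k v)"
proof (induction k)
  case 0
  then show ?case by simp
next
  case (Suc k)
  define r where "r = sc_r V E b \<alpha> (Suc k) v"
  have rb: "\<bar>r\<bar> \<le> 2" unfolding r_def by (rule sc_r_bound) (use assms in auto)
  have r_eq: "r_of E b (phi_of V E (sc_w V E b \<alpha> k)) v = r"
    by (simp add: r_def sc_r_def sc_phi_def)
  have ar: "\<bar>\<alpha> * r\<bar> \<le> 1/2"
  proof -
    have "\<bar>\<alpha> * r\<bar> = \<alpha> * \<bar>r\<bar>" using assms(4) by (simp add: abs_mult)
    also have "\<dots> \<le> (1/4) * 2" using assms(4,5) rb by (intro mult_mono) auto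
    finally show ?thesis by simp
  qed
  have p1: "0 \<le> 1 + \<alpha> * r" "0 \<le> 1 - \<alpha> * r" using ar by auto
  have e1: "1 + \<alpha> * r \<le> exp (\<alpha> * r)" by (rule exp_ge_add_one_self)
  have e2: "1 - \<alpha> * r \<le> exp (- \<alpha> * r)" using exp_ge_add_one_self[of "- \<alpha> * r"] by simp
  let ?f = "fst (sc_w V E b \<alpha> k) v" and ?s = "snd (sc_w V E b \<alpha> k) v"
  let ?x = "Xs V E b \<alpha> k v"
  have f1: "?f * (1 + \<alpha> * r) \<le> exp (\<alpha> * ?x) * exp (\<alpha> * r)"
    using Suc.IH p1 e1 by (intro mult_mono) auto
  have s1: "?s * (1 - \<alpha> * r) \<le> exp (- \<alpha> * ?x) * exp (- \<alpha> * r)"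
    using Suc.IH p1 e2 by (intro mult_mono) auto
  have x: "Xs V E b \<alpha> (Suc k) v = ?x + r" by (simp add: Xs_Suc r_def)
  have ef: "exp (\<alpha> * ?x) * exp (\<alpha> * r) = exp (\<alpha> * (?x + r))" by (simp add: exp_add[symmetric] algebra_simps)
  have es: "exp (- \<alpha> * ?x) * exp (- \<alpha> * r) = exp (- \<alpha> * (?x + r))" by (simp add: exp_add[symmetric] algebra_simps)
  show ?case
    using f1 s1 Suc.IH p1 unfolding x ef es
    by (simp add: Let_def r_eq)
qed

lemma phi_sign:
  assumes "finite E" "deg E v \<ge> 1" "\<bar>b v\<bar> \<le> deg E v" "0 < \<alpha>" "\<alpha> \<le> 1/4" "card V \<ge> 3"
  shows "(sc_phi V E b \<alpha> (Suc k) v > 0 \<longrightarrow> Xs V E b \<alpha> (Suc k) v \<ge> 0) \<and>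
         (sc_phi V E b \<alpha> (Suc k) v < 0 \<longrightarrow> Xs V E b \<alpha> (Suc k) v \<le> 0)"
proof -
  let ?f = "fst (sc_w V E b \<alpha> k) v" and ?s = "snd (sc_w V E b \<alpha> k) v"
  let ?x = "Xs V E b \<alpha> k v"
  have W: "0 \<le> ?f \<and> ?f \<le> exp (\<alpha> * ?x) \<and> 0 \<le> ?s \<and> ?s \<le> exp (- \<alpha> * ?x)"
    by (rule w_bound) (use assms in auto)
  have rb: "\<bar>sc_r V E b \<alpha> (Suc k) v\<bar> \<le> 2" by (rule sc_r_bound) (use assms in auto)
  have x: "Xs V E b \<alpha> (Suc k) v = ?x + sc_r V E b \<alpha> (Suc k) v" by (simp add: Xs_Suc)
  have ph: "sc_phi V E b \<alpha> (Suc k) v = (trunc_w (card V) ?f - trunc_w (card V) ?s) / deg E v"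
    by (simp add: sc_phi_def phi_of_def)
  have dpos: "deg E v > 0" using assms(2) by simp
  have e1: "exp 1 \<le> (3::real)" by (rule exp_le)
  have A: "?x \<ge> 4" if "?f \<ge> real (card V)"
  proof -
    have "exp 1 \<le> exp (\<alpha> * ?x)" using that W e1 assms(6) by linarith
    then have "1 \<le> \<alpha> * ?x" by simp
    moreover have "?x > 0" proof -
      have "0 < \<alpha> * ?x" using \<open>1 \<le> \<alpha> * ?x\<close> by linarith
      then show ?thesis using assms(4) by (simp add: zero_less_mult_iff)
    qed
    ultimately have "1 \<le> (1/4) * ?x" using assms(4,5)
      by (smt (verit, best) mult_right_mono)
    then show ?thesis by simp
  qed
  have B: "?x \<le> -4" if "?s \<ge> real (card V)"
  proof -
    have "exp 1 \<le> exp (- \<alpha> * ?x)" using that W e1 assms(6) by linarith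
    then have "1 \<le> \<alpha> * (- ?x)" by simp
    moreover have "- ?x > 0" proof -
      have "0 < \<alpha> * (- ?x)" using \<open>1 \<le> \<alpha> * (- ?x)\<close> by linarith
      then show ?thesis using assms(4) by (simp add: zero_less_mult_iff mult_less_0_iff)
    qed
    ultimately have "1 \<le> (1/4) * (- ?x)" using assms(4,5)
      by (smt (verit, best) mult_right_mono)
    then show ?thesis by simp
  qed
  show ?thesis
  proof (intro conjI impI)
    assume "sc_phi V E b \<alpha> (Suc k) v > 0"
    then have "trunc_w (card V) ?f > trunc_w (card V) ?s" using ph dpos
      by (simp add: zero_less_divide_iff)
    then have "?f \<ge> real (card V)" using W by (auto simp: trunc_w_def split: if_splits)
    then show "Xs V E b \<alpha> (Suc k) v \<ge> 0" using A x rb by linarith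
  next
    assume "sc_phi V E b \<alpha> (Suc k) v < 0"
    then have "trunc_w (card V) ?f < trunc_w (card V) ?s" using ph dpos
      by (simp add: divide_less_0_iff)
    then have "?s \<ge> real (card V)" using W by (auto simp: trunc_w_def split: if_splits)
    then show "Xs V E b \<alpha> (Suc k) v \<le> 0" using B x rb by linarith
  qed
qed


lemma incid_swap:
  assumes "finite V" "E \<subseteq> V \<times> V"
  shows "(\<Sum>v\<in>V. s v * incid_apply E f v) = (\<Sum>e\<in>E. s (fst e) * f e - s (snd e) * f e)"
proof -
  have "(\<Sum>v\<in>V. s v * incid_apply E f v)
      = (\<Sum>v\<in>V. \<Sum>e\<in>E. s v * ((if fst e = v then f e else 0) - (if snd e = v then f e else 0)))"
    by (simp add: incid_apply_def sum_distrib_left)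
  also have "\<dots> = (\<Sum>e\<in>E. \<Sum>v\<in>V. s v * ((if fst e = v then f e else 0) - (if snd e = v then f e else 0)))"
    by (rule sum.swap)
  also have "\<dots> = (\<Sum>e\<in>E. s (fst e) * f e - s (snd e) * f e)"
  proof (rule sum.cong[OF refl])
    fix e assume "e \<in> E"
    then have "fst e \<in> V" "snd e \<in> V" using assms(2) by auto
    then show "(\<Sum>v\<in>V. s v * ((if fst e = v then f e else 0) - (if snd e = v then f e else 0)))
       = s (fst e) * f e - s (snd e) * f e"
    proof -
      have "(\<Sum>v\<in>V. s v * ((if fst e = v then f e else 0) - (if snd e = v then f e else 0)))
          = (\<Sum>v\<in>V. (if fst e = v then s v * f e else 0) - (if snd e = v then s v * f e else 0))"
        by (rule sum.cong) auto
      also have "\<dots> = s (fst e) * f e - s (snd e) * f e"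
        using assms(1) \<open>fst e \<in> V\<close> \<open>snd e \<in> V\<close> by (simp add: sum_subtractf)
      finally show ?thesis .
    qed
  qed
  finally show ?thesis .
qed

lemma incr:
  assumes finV: "finite V" and n3: "card V \<ge> 3" and EV: "E \<subseteq> V \<times> V"
    and degpos: "\<forall>v\<in>V. deg E v \<ge> 1"
    and bbound: "\<forall>v\<in>V. \<bar>b v\<bar> \<le> deg E v"
    and alpha: "0 < \<alpha>" "\<alpha> \<le> 1/4"
  shows "(\<Sum>v\<in>V. \<bar>Xs V E b \<alpha> (Suc k) v\<bar> * deg E v)
        \<le> (\<Sum>v\<in>V. \<bar>Xs V E b \<alpha> k v\<bar> * deg E v) + (\<Sum>v\<in>V. \<bar>b v\<bar>)"
proof -
  have finE: "finite E" using finV EV finite_subset by (metis finite_SigmaI)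
  define phi where "phi = sc_phi V E b \<alpha> (Suc k)"
  define f where "f = flow_of phi"
  define X' where "X' = Xs V E b \<alpha> (Suc k)"
  define X where "X = Xs V E b \<alpha> k"
  define s where "s v = (if phi v > 0 then 1 else if phi v < 0 then -1 else sgn (X' v))" for v
  have r: "sc_r V E b \<alpha> (Suc k) v = (b v - incid_apply E f v) / deg E v" for v
    by (simp add: sc_r_def r_of_def f_def phi_def)
  have X'X: "X' v = X v + (b v - incid_apply E f v) / deg E v" for v
    by (simp add: X'_def X_def Xs_Suc r)
  have sX: "s v * X' v = \<bar>X' v\<bar> \<and> \<bar>s v\<bar> \<le> 1" if "v \<in> V" for v
  proof -
    have "(phi v > 0 \<longrightarrow> X' v \<ge> 0) \<and> (phi v < 0 \<longrightarrow> X' v \<le> 0)"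
      unfolding phi_def X'_def
      by (rule phi_sign) (use finE degpos bbound alpha n3 that in auto)
    then show ?thesis unfolding s_def by (auto simp: sgn_mult_abs abs_sgn sgn_if)
  qed
  have step1: "\<bar>X' v\<bar> * deg E v - \<bar>X v\<bar> * deg E v \<le> s v * (b v - incid_apply E f v)"
    if "v \<in> V" for v
  proof -
    have d: "deg E v > 0" using degpos that by fastforce
    have sx: "s v * X v \<le> \<bar>X v\<bar>"
    proof -
      have "s v * X v \<le> \<bar>s v * X v\<bar>" by simp
      also have "\<dots> = \<bar>s v\<bar> * \<bar>X v\<bar>" by (simp add: abs_mult)
      also have "\<dots> \<le> 1 * \<bar>X v\<bar>" using sX[OF that] by (intro mult_right_mono) auto
      finally show ?thesis by simp
    qed
    have "\<bar>X' v\<bar> - \<bar>X v\<bar> \<le> s v * (X' v - X v)"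
      using sX[OF that] sx by (simp add: right_diff_distrib)
    also have "\<dots> = s v * (b v - incid_apply E f v) / deg E v" by (simp add: X'X)
    finally have "\<bar>X' v\<bar> - \<bar>X v\<bar> \<le> s v * (b v - incid_apply E f v) / deg E v" .
    then have "(\<bar>X' v\<bar> - \<bar>X v\<bar>) * deg E v \<le> s v * (b v - incid_apply E f v)"
      using d by (simp add: le_divide_eq)
    then show ?thesis by (simp add: left_diff_distrib)
  qed
  have step2: "s v * b v \<le> \<bar>b v\<bar>" if "v \<in> V" for v
  proof -
    have "s v * b v \<le> \<bar>s v\<bar> * \<bar>b v\<bar>" by (metis abs_ge_self abs_mult)
    also have "\<dots> \<le> 1 * \<bar>b v\<bar>" using sX[OF that] by (intro mult_right_mono) auto
    finally show ?thesis by simp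
  qed
  have step3: "0 \<le> (\<Sum>v\<in>V. s v * incid_apply E f v)"
  proof -
    have "0 \<le> (\<Sum>e\<in>E. s (fst e) * f e - s (snd e) * f e)"
    proof (rule sum_nonneg)
      fix e assume e: "e \<in> E"
      then have uv: "fst e \<in> V" "snd e \<in> V" using EV by auto
      have mono: "s x \<ge> s y" if "phi x > phi y" "x \<in> V" "y \<in> V" for x y
      proof (cases "phi x > 0")
        case True then show ?thesis by (auto simp: s_def sgn_if)
      next
        case False then have "phi y < 0" using that by linarith
        then show ?thesis by (auto simp: s_def sgn_if)
      qed
      show "0 \<le> s (fst e) * f e - s (snd e) * f e"
        using mono[OF _ uv] mono[OF _ uv(2,1)]
        by (auto simp: f_def flow_of_def)
    qed
    then show ?thesis using incid_swap[OF finV EV] by simp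
  qed
  have "(\<Sum>v\<in>V. \<bar>X' v\<bar> * deg E v) - (\<Sum>v\<in>V. \<bar>X v\<bar> * deg E v)
      = (\<Sum>v\<in>V. \<bar>X' v\<bar> * deg E v - \<bar>X v\<bar> * deg E v)" by (simp add: sum_subtractf)
  also have "\<dots> \<le> (\<Sum>v\<in>V. s v * (b v - incid_apply E f v))" by (rule sum_mono) (rule step1)
  also have "\<dots> = (\<Sum>v\<in>V. s v * b v) - (\<Sum>v\<in>V. s v * incid_apply E f v)"
    by (simp add: right_diff_distrib sum_subtractf)
  also have "\<dots> \<le> (\<Sum>v\<in>V. \<bar>b v\<bar>)" proof -
    have "(\<Sum>v\<in>V. s v * b v) \<le> (\<Sum>v\<in>V. \<bar>b v\<bar>)" by (rule sum_mono) (rule step2)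
    then show ?thesis using step3 by linarith
  qed
  finally show ?thesis unfolding X'_def X_def by linarith
qed

theorem lemma2p8:
  fixes V :: "'v set" and E :: "('v \<times> 'v) set" and b :: "'v \<Rightarrow> real"
    and \<alpha> :: real and T i :: nat
  assumes finV: "finite V"
    and n3: "card V \<ge> 3"
    and EV: "E \<subseteq> V \<times> V"
    and noloop: "\<forall>e\<in>E. fst e \<noteq> snd e"
    and orient: "\<forall>u v. (u, v) \<in> E \<longrightarrow> (v, u) \<notin> E"
    and degpos: "\<forall>v\<in>V. deg E v \<ge> 1"
    and bbound: "\<forall>v\<in>V. \<bar>b v\<bar> \<le> deg E v"
    and alpha: "0 < \<alpha>" "\<alpha> \<le> 1/4"
    and T: "T \<ge> 1"
    and iT: "i \<le> T"
    and ran: "\<forall>i'\<in>{1..i}. \<not> sc_terminates V E b \<alpha> i'"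
  shows "(\<Sum>v\<in>V. \<bar>\<Sum>i'\<in>{1..i}. sc_r V E b \<alpha> i' v\<bar> * deg E v)
           \<le> real i * (\<Sum>v\<in>V. \<bar>b v\<bar>)"
proof -
  have "(\<Sum>v\<in>V. \<bar>Xs V E b \<alpha> k v\<bar> * deg E v) \<le> real k * (\<Sum>v\<in>V. \<bar>b v\<bar>)" for k
  proof (induction k)
    case 0 then show ?case by simp
  next
    case (Suc k)
    show ?case using incr[OF finV n3 EV degpos bbound alpha, of k] Suc.IH
      by (simp add: distrib_right)
  qed
  then show ?thesis by (simp add: Xs_def)
qed

end
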